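(* Let $p=\tfrac23$, $q=\tfrac13$, and let $g_0(z),g_1(z),g_2(z),\dots$ and $g_\beta(z)$ be the formal power series in $z$ uniquely determined by $$g_0=1+zg_\beta+qzg_2,\qquad g_\beta=qzg_1,\qquad g_1=zg_0+qzg_3,\qquad g_i=pzg_{i-1}+qzg_{i+2}\ (i\ge2).$$ Put $G(u,z)=\sum_{i\ge0}u^ig_i(z)$, write $V=uz$, $x=z^3$, and let $t=t(x)$ be the formal power series with $t(0)=0$ satisfying $x=\tfrac{27}{4}t(1-t)^2$. Then: (i) $$G(u,z)=2\,\frac{2+\frac{2}{3(1-t)}V}{(1-3t)(4-3t)}\cdot\frac{1}{1-\frac{2}{3(1-t)}V};$$ in particular, written in the variable $V$, only powers of $z$ that are multiples of $3$ appear. (ii) For $j\ge1$, $$[V^j]G=\frac{6}{(1-3t)(4-3t)}\Big(\frac23\cdot\frac1{1-t}\Big)^j,\qquad [u^j]G=z^j\frac{6}{(1-3t)(4-3t)}\Big(\frac23\cdot\frac1{1-t}\Big)^j.$$ (iii) For $j\ge1$ and $N\ge0$, $$[z^{j+3N}u^j]G(u,z)=\sum_{i=0}^N\frac{2^{2i+j-1}}{3^{2N+i+j-1}}\binom{2N+j+i}{i}.$$ (iv) For $N\ge0$, $$[z^{3N}]g_0=\sum_{i=0}^N\frac{2^{2i}}{3^{2N+i}}\binom{2N+i}{i},\qquad [z^{3N+2}]g_\beta=\frac13[z^{3N+1}]g_1=\sum_{i=0}^N\frac{2^{2i}}{3^{2N+i+1}}\binom{2N+1+i}{i}.$$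
   Context: Dual online bin-packing model: bins have size 1; at each step either a single item of size $\tfrac23$ arrives (probability $p=\tfrac23$) or a double-pack of two items of size $\tfrac13$ arrives (probability $q=\tfrac13$). State $i\ge0$ means $i$ boxes filled to $\tfrac23$; $\beta$ is an exceptional state (one box filled to $\tfrac13$). The coefficient of $z^n$ in $g_i(z)$ (resp. $g_\beta(z)$) is the probability that $n$ random steps starting from state $0$ lead to state $i$ (resp. $\beta$); these series are defined by the recursion in the claim. $[\cdot]$ denotes coefficient extraction. *)

theory Defs
  imports "HOL-Computational_Algebra.Formal_Power_Series"
begin

text \<open>t(x) evaluated at x = z^3, as a series in z\<close>
definition t_of_z :: "real fps \<Rightarrow> real fps" where
  "t_of_z t = fps_compose t (fps_X ^ 3)"

definition a_ser :: "real fps \<Rightarrow> real fps" where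
  "a_ser t = fps_const (2/3) * inverse (1 - t_of_z t)"

definition C_ser :: "real fps \<Rightarrow> real fps" where
  "C_ser t = inverse ((1 - 3 * t_of_z t) * (4 - 3 * t_of_z t))"

text \<open>Bivariate series: outer variable u, inner (coefficient) variable z; V = u z\<close>
definition V_ser :: "real fps fps" where
  "V_ser = fps_X * fps_const fps_X"

end

theory Submission
  imports Defs
begin


definition U :: "nat \<Rightarrow> nat \<Rightarrow> real" where
  "U m N = (\<Sum>i=0..N. (4/3)^i * real ((m+i) choose i))"

lemma U_0: "U m 0 = 1" by (simp add: U_def)

lemma U_pascal: "U (Suc m) (Suc N) = U m (Suc N) + 4/3 * U (Suc m) N"
proof -
  have "U (Suc m) (Suc N) = 1 + (\<Sum>k=0..N. (4/3)^Suc k * real ((Suc m + Suc k) choose Suc k))"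
    unfolding U_def by (subst sum.atLeast0_atMost_Suc_shift) simp
  also have "\<dots> = 1 + (\<Sum>k=0..N. (4/3)^Suc k * real ((m + Suc k) choose Suc k))
        + (\<Sum>k=0..N. (4/3)^Suc k * real ((Suc m + k) choose k))"
  proof -
    have e: "(Suc m + Suc k choose Suc k) = (m + Suc k choose Suc k) + (Suc m + k choose k)" for k
      by (metis binomial_Suc_Suc add_Suc_right add_Suc add.commute)
    show ?thesis by (simp only: e of_nat_add distrib_left sum.distrib add.assoc)
  qed
  also have "1 + (\<Sum>k=0..N. (4/3)^Suc k * real ((m + Suc k) choose Suc k)) = U m (Suc N)"
    unfolding U_def by (subst sum.atLeast0_atMost_Suc_shift) simp
  also have "(\<Sum>k=0..N. (4/3)^Suc k * real ((Suc m + k) choose k)) = 4/3 * U (Suc m) N"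
    unfolding U_def by (simp add: sum_distrib_left mult.assoc)
  finally show ?thesis .
qed

lemma gosper:
  "(\<Sum>i<k. (4/3)^i * real ((2*K+1+i) choose i) * (8*real K+8+real i)) = 3*k*(4/3)^k * real ((2*K+1+k) choose k)"
proof (induction k)
  case 0 then show ?case by simp
next
  case (Suc k)
  have b: "real (Suc k) * real (Suc (2*K+1+k) choose Suc k) = real (Suc (2*K+1+k)) * real ((2*K+1+k) choose k)"
    using Suc_times_binomial[of k "2*K+1+k"] by (metis of_nat_mult)
  have "(\<Sum>i<Suc k. (4/3)^i * real ((2*K+1+i) choose i) * (8*real K+8+real i))
      = 3*k*(4/3)^k * real ((2*K+1+k) choose k) + (4/3)^k * real ((2*K+1+k) choose k) * (8*real K+8+real k)"
    using Suc by simp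
  also have "\<dots> = (4/3)^k * 4 * (real (Suc (2*K+1+k)) * real ((2*K+1+k) choose k))"
    by (simp add: algebra_simps)
  also have "\<dots> = (4/3)^k * 4 * (real (Suc k) * real (Suc (2*K+1+k) choose Suc k))"
    by (simp only: b)
  also have "\<dots> = 3*real (Suc k)*(4/3)^Suc k * real ((2*K+1+Suc k) choose Suc k)"
    by (simp add: algebra_simps)
  finally show ?case .
qed

lemma U_special: "U (2*K+2) (Suc K) = 3 * U (2*K+1) K + 2 * U (2*K+2) K"
proof -
  have c1: "real ((2*K+2+i) choose i) * (2*K+2) = real ((2*K+1+i) choose i) * (2*K+2+i)" for i
  proof -
    have "(Suc (2*K+1+i) - i) * (Suc (2*K+1+i) choose i) = Suc (2*K+1+i) * ((2*K+1+i) choose i)"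
      using binomial_absorb_comp[of "Suc (2*K+1+i)" i] by simp
    then have "real (Suc (2*K+1+i) - i) * real (Suc (2*K+1+i) choose i) = real (Suc (2*K+1+i)) * real ((2*K+1+i) choose i)"
      by (metis of_nat_mult)
    moreover have "Suc (2*K+1+i) - i = 2*K+2" by simp
    ultimately show ?thesis by (simp add: algebra_simps)
  qed
  have tm: "3 * real ((2*K+1+i) choose i) + real ((2*K+2+i) choose i)
      = real ((2*K+1+i) choose i) * (8*real K+8+real i) / (2*K+2)" for i
    using c1[of i] by (simp add: field_simps)
  have "3 * U (2*K+1) K + U (2*K+2) K = (\<Sum>i=0..K. (4/3)^i * (3 * real ((2*K+1+i) choose i) + real ((2*K+2+i) choose i)))"
    unfolding U_def by (simp add: sum_distrib_left sum.distrib algebra_simps)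
  also have "\<dots> = (\<Sum>i<Suc K. (4/3)^i * real ((2*K+1+i) choose i) * (8*real K+8+real i)) / (2*K+2)"
    unfolding tm by (simp add: sum_divide_distrib atLeast0AtMost lessThan_Suc_atMost mult.assoc)
  also have "\<dots> = 3*real (Suc K)*(4/3)^Suc K * real ((2*K+1+Suc K) choose Suc K) / (2*K+2)"
    by (simp only: gosper)
  also have "\<dots> = (4/3)^Suc K * real ((2*K+2+Suc K) choose Suc K)"
  proof -
    have "(Suc (2*K+1+Suc K) - Suc K) * (Suc (2*K+1+Suc K) choose Suc K) = Suc (2*K+1+Suc K) * ((2*K+1+Suc K) choose Suc K)"
      using binomial_absorb_comp[of "Suc (2*K+1+Suc K)" "Suc K"] by simp
    then have "real (Suc (2*K+1+Suc K) - Suc K) * real (Suc (2*K+1+Suc K) choose Suc K) = real (Suc (2*K+1+Suc K)) * real ((2*K+1+Suc K) choose Suc K)"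
      by (metis of_nat_mult)
    moreover have "Suc (2*K+1+Suc K) - Suc K = 2*K+2" "Suc (2*K+1+Suc K) = 2*K+2+Suc K" by simp_all
    ultimately have h: "real ((2*K+2+Suc K) choose Suc K) * (2*real K+2) = (3*real K+3) * real ((2*K+1+Suc K) choose Suc K)"
      by (simp add: algebra_simps)
    have aux: "b2 * (2*real K+2) = (3*real K + 3)*b1 \<Longrightarrow> 3*real (Suc K)*c * b1 / (2*real K+2) = c * b2" for b1 b2 c
    proof -
      assume a: "b2 * (2*real K+2) = (3*real K + 3)*b1"
      have "(2*b2 - 3*b1) * (real K + 1) = 0" using a by (simp add: algebra_simps)
      then have "2*b2 - 3*b1 = 0" by (metis mult_eq_0_iff of_nat_Suc of_nat_eq_0_iff add.commute nat.distinct(1))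
      then have "b2 = 3/2*b1" by simp
      then have e1: "c * b2 = 3/2*c*b1" by simp
      have e2: "3*real (Suc K)*c * b1 / (2*real K+2) = 3/2*c*b1" by (simp add: field_simps)
      show ?thesis by (simp only: e1 e2)
    qed
    show ?thesis using aux[OF h, of "(4/3)^Suc K"] by (simp del: binomial_Suc_Suc add: algebra_simps)
  qed
  finally have "3 * U (2*K+1) K + U (2*K+2) K = (4/3)^Suc K * real ((2*K+2+Suc K) choose Suc K)" .
  moreover have "U (2*K+2) (Suc K) = U (2*K+2) K + (4/3)^Suc K * real ((2*K+2+Suc K) choose Suc K)"
    unfolding U_def by simp
  ultimately show ?thesis by simp
qed

definition W :: "nat \<Rightarrow> nat \<Rightarrow> real" where
  "W j N = (2/3)^j * (1/9)^N * U (2*N+j) N"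

lemma W_0: "W j 0 = (2/3)^j" by (simp add: W_def U_0)

lemma W_rec: "W (Suc j) (Suc K) = 2/3 * W j (Suc K) + 1/3 * W (j+3) K"
proof -
  have u: "U (2*Suc K + Suc j) (Suc K) = U (2*Suc K + j) (Suc K) + 4/3 * U (2*K + (j+3)) K"
  proof -
    have e1: "2*Suc K + Suc j = Suc (2*Suc K + j)" by simp
    have e2: "2*K + (j+3) = Suc (2*Suc K + j)" by simp
    show ?thesis unfolding e1 e2 by (rule U_pascal)
  qed
  show ?thesis unfolding W_def u by (simp add: field_simps power_add)
qed

lemma W_special: "W 0 (Suc K) = 1/2 * W 1 K + 1/2 * W 2 K"
proof -
  have u: "U (2*Suc K + 0) (Suc K) = 3 * U (2*K+1) K + 2 * U (2*K+2) K"
    using U_special[of K] by (simp add: algebra_simps)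
  show ?thesis unfolding W_def u by (simp add: field_simps)
qed

definition cj :: "nat \<Rightarrow> real" where "cj j = (if j = 0 then 1 else 3/2)"

definition E :: "nat \<Rightarrow> nat \<Rightarrow> real" where
  "E j n = (if j \<le> n \<and> 3 dvd (n - j) then cj j * W j ((n-j) div 3) else 0)"

definition Eb :: "nat \<Rightarrow> real" where
  "Eb n = (if n = 0 then 0 else 1/3 * E 1 (n-1))"

lemma E_at: "E j (j + 3*N) = cj j * W j N"
  by (simp add: E_def)

lemma E_off: "(\<And>N. n \<noteq> j + 3*N) \<Longrightarrow> E j n = 0"
proof -
  assume h: "\<And>N. n \<noteq> j + 3*N"
  have "\<not> (j \<le> n \<and> 3 dvd (n - j))"
  proof
    assume "j \<le> n \<and> 3 dvd (n - j)"
    then obtain k where "j \<le> n" "n - j = 3*k" by (auto elim: dvdE)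
    then have "n = j + 3*k" by simp
    with h show False by blast
  qed
  then show ?thesis unfolding E_def by (rule if_not_P)
qed

lemma E_nz: "E j n \<noteq> 0 \<Longrightarrow> \<exists>N. n = j + 3*N"
  using E_off by blast

lemma E_base: "E j 0 = (if j = 0 then 1 else 0)"
  by (simp add: E_def cj_def W_0)

lemma Eb_base: "Eb 0 = 0" by (simp add: Eb_def)

lemma Eb_rec: "Eb (Suc m) = 1/3 * E 1 m" by (simp add: Eb_def)

lemma E_rec: assumes "j \<ge> 1"
  shows "E j (Suc m) = (if j = 1 then 1 else 2/3) * E (j-1) m + 1/3 * E (j+2) m"
proof (cases "\<exists>N. Suc m = j + 3*N")
  case True
  then obtain N where N: "Suc m = j + 3*N" by blast
  then have m: "m = (j-1) + 3*N" using assms by simp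
  show ?thesis
  proof (cases N)
    case 0
    have "E (j+2) m = 0" using m 0 by (intro E_off) auto
    moreover have "E j (Suc m) = cj j * W j 0" using N 0 E_at[of j 0] by simp
    moreover have "E (j-1) m = cj (j-1) * W (j-1) 0" using m 0 E_at[of "j-1" 0] by simp
    ultimately show ?thesis using assms
      by (cases j) (auto simp: cj_def W_0)
  next
    case (Suc K)
    have a: "E (j+2) m = cj (j+2) * W (j+2) K" using m Suc assms E_at[of "j+2" K]
      by (simp add: algebra_simps)
    have b: "E j (Suc m) = cj j * W j (Suc K)" proof -
      have e: "Suc m = j + 3*Suc K" using N Suc by simp
      show ?thesis unfolding e by (rule E_at)
    qed
    have c: "E (j-1) m = cj (j-1) * W (j-1) (Suc K)" using m Suc E_at[of "j-1" "Suc K"] by simp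
    obtain j' where j': "j = Suc j'" using assms by (cases j) auto
    have w: "W j (Suc K) = 2/3 * W j' (Suc K) + 1/3 * W (j+2) K"
    proof -
      have e: "Suc j' + 2 = j' + 3" by simp
      show ?thesis unfolding j' e by (rule W_rec)
    qed
    show ?thesis unfolding a b c w using j' by (simp add: cj_def algebra_simps)
  qed
next
  case False
  have "E j (Suc m) = 0" using False by (intro E_off) auto
  moreover have "E (j-1) m = 0"
  proof (rule E_off)
    fix N show "m \<noteq> j - 1 + 3*N"
    proof
      assume "m = j - 1 + 3*N"
      with assms have "Suc m = j + 3*N" by simp
      with False show False by blast
    qed
  qed
  moreover have "E (j+2) m = 0"
  proof (rule E_off)
    fix N show "m \<noteq> j + 2 + 3*N"
    proof
      assume "m = j + 2 + 3*N"
      then have "Suc m = j + 3*Suc N" by simp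
      with False show False by blast
    qed
  qed
  ultimately show ?thesis by simp
qed

lemma E0_rec: "E 0 (Suc m) = Eb m + 1/3 * E 2 m"
proof (cases "\<exists>N. Suc m = 3*N")
  case True
  then obtain N where N: "Suc m = 3*N" by blast
  then obtain K where K: "N = Suc K" by (cases N) auto
  have m: "m = 2 + 3*K" "m - 1 = 1 + 3*K" using N K by simp_all
  have a: "Eb m = 1/3 * (cj 1 * W 1 K)" unfolding Eb_def using m E_at[of 1 K] by simp
  have b: "E 2 m = cj 2 * W 2 K" using m E_at[of 2 K] by simp
  have c: "E 0 (Suc m) = cj 0 * W 0 (Suc K)" proof -
    have e: "Suc m = 0 + 3*Suc K" using N K by simp
    show ?thesis unfolding e by (rule E_at)
  qed
  show ?thesis unfolding a b c W_special by (simp add: cj_def)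
next
  case False
  have "E 0 (Suc m) = 0" using False by (intro E_off) auto
  moreover have "Eb m = 0"
  proof (cases m)
    case 0 then show ?thesis by (simp add: Eb_def)
  next
    case (Suc m')
    have "E 1 m' = 0"
    proof (rule E_off)
      fix N show "m' \<noteq> 1 + 3*N"
      proof
        assume "m' = 1 + 3*N"
        with Suc have "Suc m = 3*Suc N" by simp
        with False show False by blast
      qed
    qed
    then show ?thesis using Suc by (simp add: Eb_def)
  qed
  moreover have "E 2 m = 0"
  proof (rule E_off)
    fix N show "m \<noteq> 2 + 3*N"
    proof
      assume "m = 2 + 3*N"
      then have "Suc m = 3*Suc N" by simp
      with False show False by blast
    qed
  qed
  ultimately show ?thesis by simp
qed



lemma algA:
  fixes T u x a k23 k13 k274 :: "real fps"
  assumes "(1-T)*u = 1" "x = k274*T*(1-T)^2" "a = k23*u" "3*k23 = 2" "3*k13 = 1" "4*k274 = 27"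
  shows "a = k23 + k13*a^3*x"
  using assms by algebra

lemma algB:
  fixes T u x a C k23 k274 :: "real fps"
  assumes "(1-T)*u = 1" "x = k274*T*(1-T)^2" "a = k23*u" "3*k23 = 2" "4*k274 = 27"
     "((1-3*T)*(4-3*T))*C = 1"
  shows "4*C = 1 + 2*C*x*(a + a^2)"
  using assms by algebra

definition sys :: "(nat \<Rightarrow> real fps) \<Rightarrow> real fps \<Rightarrow> bool" where
  "sys g gb \<longleftrightarrow> g 0 = 1 + fps_X * gb + fps_const (1/3) * fps_X * g 2
     \<and> gb = fps_const (1/3) * fps_X * g 1
     \<and> g 1 = fps_X * g 0 + fps_const (1/3) * fps_X * g 3
     \<and> (\<forall>i\<ge>2. g i = fps_const (2/3) * fps_X * g (i - 1) + fps_const (1/3) * fps_X * g (i + 2))"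

lemma cX_nth: fixes c :: real and f :: "real fps" shows "fps_nth (fps_const c * fps_X * f) n = (if n = 0 then 0 else c * fps_nth f (n - 1))"
proof -
  have "fps_nth (fps_const c * (fps_X * f)) n = (if n = 0 then 0 else c * fps_nth f (n - 1))" by simp
  then show ?thesis by (simp only: mult.assoc)
qed

lemma sys_E:
  assumes "sys g gb"
  shows "(\<forall>i. fps_nth (g i) n = E i n) \<and> fps_nth gb n = Eb n"
proof -
  have s: "g 0 = 1 + fps_X * gb + fps_const (1/3) * fps_X * g 2"
     "gb = fps_const (1/3) * fps_X * g 1"
     "g 1 = fps_X * g 0 + fps_const (1/3) * fps_X * g 3"
     "\<And>i. i\<ge>2 \<Longrightarrow> g i = fps_const (2/3) * fps_X * g (i - 1) + fps_const (1/3) * fps_X * g (i + 2)"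
    using assms unfolding sys_def by blast+
  show ?thesis
  proof (induction n)
    case 0
    have "fps_nth (g 0) 0 = 1" by (subst s(1)) (simp add: cX_nth)
    moreover have "fps_nth (g 1) 0 = 0" by (subst s(3)) (simp add: cX_nth)
    moreover have "fps_nth (g i) 0 = 0" if "i \<ge> 2" for i by (subst s(4)[OF that]) (simp add: cX_nth)
    moreover have "fps_nth gb 0 = 0" by (subst s(2)) (simp add: cX_nth)
    ultimately have "fps_nth (g i) 0 = E i 0" for i
      by (cases "i = 0"; cases "i = 1") (auto simp: E_base)
    then show ?case using \<open>fps_nth gb 0 = 0\<close> Eb_base by simp
  next
    case (Suc m)
    then have IH: "\<And>i. fps_nth (g i) m = E i m" "fps_nth gb m = Eb m" by auto
    have "fps_nth (g 0) (Suc m) = E 0 (Suc m)"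
      by (subst s(1)) (simp add: cX_nth IH E0_rec)
    moreover have "fps_nth (g 1) (Suc m) = E 1 (Suc m)"
      by (subst s(3)) (simp add: cX_nth IH E_rec numeral_3_eq_3)
    moreover have "fps_nth (g i) (Suc m) = E i (Suc m)" if "i \<ge> 2" for i
      using that by (subst s(4)[OF that]) (simp add: cX_nth IH E_rec)
    ultimately have "fps_nth (g i) (Suc m) = E i (Suc m)" for i
      by (cases "i = 0"; cases "i = 1") auto
    moreover have "fps_nth gb (Suc m) = Eb (Suc m)"
      by (subst s(2)) (simp add: cX_nth IH Eb_rec)
    ultimately show ?case by simp
  qed
qed



lemma algI:
  fixes X Xl al a C k23 k13 x :: "real fps"
  assumes "a = k23 + k13*a^3*x" "x = X^3"
  shows "Xl*X^2*(6*C*(al*a^2)) = k23*X*(Xl*X^1*(6*C*(al*a^1))) + k13*X*(Xl*X^4*(6*C*(al*a^4)))"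
  using assms by algebra

lemma alg1:
  fixes X a C k23 k13 x :: "real fps"
  assumes "a = k23 + k13*a^3*x" "x = X^3" "3*k23 = 2" "3*k13 = 1"
  shows "X^1*(6*C*a^1) = X*(4*C) + k13*X*(X^3*(6*C*a^3))"
  using assms by algebra

lemma alg0:
  fixes X a C k13 x :: "real fps"
  assumes "4*C = 1 + 2*C*x*(a + a^2)" "x = X^3" "3*k13 = 1"
  shows "4*C = 1 + X*(k13*X*(X^1*(6*C*a^1))) + k13*X*(X^2*(6*C*a^2))"
  using assms by algebra

lemma sum_conv:
  assumes "j \<ge> 1"
  shows "3/2 * ((2/3)^j * (1/9)^N * U (2*N+j) N) =
    (\<Sum>i=0..N. 2 ^ (2*i + j - 1) / 3 ^ (2*N + i + j - 1) * real ((2*N + j + i) choose i))"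
proof -
  obtain k where k: "j = Suc k" using assms by (cases j) auto
  have "3/2 * ((2/3)^j * (1/9)^N * U (2*N+j) N) =
    (\<Sum>i=0..N. 3/2 * ((2/3)^j * (1/9)^N) * (4/3)^i * real ((2*N + j + i) choose i))"
    unfolding U_def by (simp add: sum_distrib_left mult.assoc)
  also have "\<dots> = (\<Sum>i=0..N. 2 ^ (2*i + j - 1) / 3 ^ (2*N + i + j - 1) * real ((2*N + j + i) choose i))"
  proof (rule sum.cong[OF refl])
    fix i
    have p9: "(3::real)^(2*N) = 9^N" and p4: "(2::real)^(2*i) = 4^i" by (simp_all add: power_mult)
    have "3/2 * ((2/3)^j * (1/9)^N) * (4/3)^i = (2::real) ^ (2*i + j - 1) / 3 ^ (2*N + i + j - 1)"
      unfolding k using p9 p4 by (simp add: power_add field_simps)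
    then show "3/2 * ((2/3)^j * (1/9)^N) * (4/3)^i * real ((2*N + j + i) choose i) =
       2 ^ (2*i + j - 1) / 3 ^ (2*N + i + j - 1) * real ((2*N + j + i) choose i)" by simp
  qed
  finally show ?thesis .
qed

lemma sum_conv0:
  "(1/9)^N * U (2*N) N = (\<Sum>i=0..N. 2 ^ (2*i) / 3 ^ (2*N + i) * real ((2*N + i) choose i))"
proof -
  have "(1/9)^N * U (2*N) N = (\<Sum>i=0..N. (1/9)^N * (4/3)^i * real ((2*N + i) choose i))"
    unfolding U_def by (simp add: sum_distrib_left mult.assoc)
  also have "\<dots> = (\<Sum>i=0..N. 2 ^ (2*i) / 3 ^ (2*N + i) * real ((2*N + i) choose i))"
  proof (rule sum.cong[OF refl])
    fix i
    have p9: "(3::real)^(2*N) = 9^N" and p4: "(2::real)^(2*i) = 4^i" by (simp_all add: power_mult)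
    have "(1/9)^N * (4/3)^i = (2::real) ^ (2*i) / 3 ^ (2*N + i)"
      using p9 p4 by (simp add: power_add field_simps)
    then show "(1/9)^N * (4/3)^i * real ((2*N + i) choose i) =
       2 ^ (2*i) / 3 ^ (2*N + i) * real ((2*N + i) choose i)" by simp
  qed
  finally show ?thesis .
qed

lemma sum_convb:
  "1/3 * (3/2 * ((2/3)^1 * (1/9)^N * U (2*N+1) N)) = (\<Sum>i=0..N. 2 ^ (2*i) / 3 ^ (2*N + i + 1) * real ((2*N + 1 + i) choose i))"
proof -
  have "1/3 * (3/2 * ((2/3)^1 * (1/9)^N * U (2*N+1) N)) = (\<Sum>i=0..N. (1/3) * (1/9)^N * (4/3)^i * real ((2*N + 1 + i) choose i))"
    unfolding U_def by (simp add: sum_distrib_left mult.assoc)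
  also have "\<dots> = (\<Sum>i=0..N. 2 ^ (2*i) / 3 ^ (2*N + i + 1) * real ((2*N + 1 + i) choose i))"
  proof (rule sum.cong[OF refl])
    fix i
    have p9: "(3::real)^(2*N) = 9^N" and p4: "(2::real)^(2*i) = 4^i" by (simp_all add: power_mult)
    have "(1/3) * (1/9)^N * (4/3)^i = (2::real) ^ (2*i) / 3 ^ (2*N + i + 1)"
      using p9 p4 by (simp add: power_add field_simps)
    then show "(1/3) * (1/9)^N * (4/3)^i * real ((2*N + 1 + i) choose i) =
       2 ^ (2*i) / 3 ^ (2*N + i + 1) * real ((2*N + 1 + i) choose i)" by simp
  qed
  finally show ?thesis .
qed



theorem theorem2:
  fixes g :: "nat \<Rightarrow> real fps" and gb :: "real fps" and t :: "real fps"
  defines "p \<equiv> fps_const (2/3 :: real)" and "q \<equiv> fps_const (1/3 :: real)"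
  assumes eq0: "g 0 = 1 + fps_X * gb + q * fps_X * g 2"
      and eqb: "gb = q * fps_X * g 1"
      and eq1: "g 1 = fps_X * g 0 + q * fps_X * g 3"
      and eqi: "\<And>i. i \<ge> 2 \<Longrightarrow> g i = p * fps_X * g (i - 1) + q * fps_X * g (i + 2)"
      and t0: "fps_nth t 0 = 0"
      and tx: "fps_X = fps_const (27/4) * t * (1 - t)^2"
  shows
    "Abs_fps g = fps_const (2 * C_ser t) * (2 + fps_const (a_ser t) * V_ser)
         * inverse (1 - fps_const (a_ser t) * V_ser)
     \<and> (\<forall>j n. fps_nth (g j) n \<noteq> 0 \<longrightarrow> j \<le> n \<and> 3 dvd (n - j))
     \<and> (\<forall>j\<ge>1. g j = fps_X ^ j * (6 * C_ser t * a_ser t ^ j))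
     \<and> (\<forall>j\<ge>1. \<forall>N. fps_nth (g j) (j + 3 * N) =
           (\<Sum>i=0..N. 2 ^ (2*i + j - 1) / 3 ^ (2*N + i + j - 1) * real ((2*N + j + i) choose i)))
     \<and> (\<forall>N. fps_nth (g 0) (3 * N) =
           (\<Sum>i=0..N. 2 ^ (2*i) / 3 ^ (2*N + i) * real ((2*N + i) choose i)))
     \<and> (\<forall>N. fps_nth gb (3 * N + 2) = 1/3 * fps_nth (g 1) (3 * N + 1)
           \<and> fps_nth gb (3 * N + 2) =
             (\<Sum>i=0..N. 2 ^ (2*i) / 3 ^ (2*N + i + 1) * real ((2*N + 1 + i) choose i)))"
proof -
  have sysg: "sys g gb" using eq0 eqb eq1 eqi unfolding sys_def p_def q_def by blast
  have gE: "\<And>i n. fps_nth (g i) n = E i n" and gbE: "\<And>n. fps_nth gb n = Eb n"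
    using sys_E[OF sysg] by auto
  define T where "T = t_of_z t"
  define a where "a = a_ser t"
  define C where "C = C_ser t"
  define x :: "real fps" where "x = fps_X ^ 3"
  have x0: "fps_nth x 0 = 0" by (simp add: x_def)
  have T0: "fps_nth T 0 = 0" by (simp add: T_def t_of_z_def t0)
  have TX: "x = fps_const (27/4) * T * (1 - T)^2"
  proof -
    have "fps_X oo x = (fps_const (27/4) * t * (1-t)^2) oo x" using tx by simp
    also have "fps_X oo x = x" using x0 by simp
    also have "(fps_const (27/4) * t * (1-t)^2) oo x = ((fps_const (27/4) * t) oo x) * ((1-t)^2 oo x)"
      using x0 by (rule fps_compose_mult_distrib)
    also have "(fps_const (27/4) * t) oo x = fps_const (27/4) * T"
      unfolding T_def t_of_z_def x_def by (rule fps_const_mult_apply_left[symmetric])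
    also have "(1-t)^2 oo x = ((1 - t) oo x)^2"
      using x0 by (rule fps_compose_power[symmetric])
    also have "(1 - t) oo x = 1 - T"
      unfolding T_def t_of_z_def x_def by (simp add: fps_compose_sub_distrib)
    finally show ?thesis by (simp add: mult.assoc)
  qed
  define u where "u = inverse (1 - T)"
  have u1: "(1 - T) * u = 1" unfolding u_def by (rule inverse_mult_eq_1') (simp add: T0)
  have au: "a = fps_const (2/3) * u" unfolding a_def a_ser_def u_def T_def ..
  have C1: "((1-3*T)*(4-3*T)) * C = 1" unfolding C_def C_ser_def T_def[symmetric]
    by (rule inverse_mult_eq_1') (simp add: T0 numeral_fps_const)
  have k23: "3 * fps_const (2/3::real) = 2" by (simp add: numeral_fps_const)
  have k13: "3 * fps_const (1/3::real) = 1" by (simp add: numeral_fps_const)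
  have k274: "4 * fps_const (27/4::real) = 27" by (simp add: numeral_fps_const)
  have A: "a = fps_const (2/3) + fps_const (1/3) * a^3 * x"
    by (rule algA[OF u1 TX au k23 k13 k274])
  have B: "4*C = 1 + 2*C*x*(a + a^2)"
    by (rule algB[OF u1 TX au k23 k274 C1])
  define H where "H j = (if j = 0 then 4*C else fps_X^j * (6*C*a^j))" for j
  define Hb where "Hb = fps_const (1/3) * fps_X * H 1"
  have sysH: "sys H Hb"
    unfolding sys_def
  proof (intro conjI allI impI)
    show "H 0 = 1 + fps_X * Hb + fps_const (1 / 3) * fps_X * H 2"
      unfolding H_def Hb_def using alg0[OF B x_def k13] by simp
    show "Hb = fps_const (1 / 3) * fps_X * H 1" by (simp add: Hb_def)
    show "H 1 = fps_X * H 0 + fps_const (1 / 3) * fps_X * H 3"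
      unfolding H_def using alg1[OF A x_def k23 k13] by simp
    fix i :: nat assume "2 \<le> i"
    then obtain l where l: "i = l + 2" by (metis le_add_diff_inverse2)
    have i1: "i - 1 = l + 1" "i + 2 = l + 4" using l by simp_all
    have H1': "H i = fps_X^(l+2)*(6*C*a^(l+2))" unfolding H_def l by simp
    have H2': "H (i-1) = fps_X^(l+1)*(6*C*a^(l+1))" unfolding H_def i1 by simp
    have H3': "H (i+2) = fps_X^(l+4)*(6*C*a^(l+4))" unfolding H_def i1 by simp
    have H1: "H i = fps_X^l*fps_X^2*(6*C*(a^l*a^2))" by (simp only: H1' power_add)
    have H2: "H (i-1) = fps_X^l*fps_X^1*(6*C*(a^l*a^1))" by (simp only: H2' power_add)
    have H3: "H (i+2) = fps_X^l*fps_X^4*(6*C*(a^l*a^4))" by (simp only: H3' power_add)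
    show "H i = fps_const (2 / 3) * fps_X * H (i - 1) + fps_const (1 / 3) * fps_X * H (i + 2)"
      unfolding H1 H2 H3 by (rule algI[OF A x_def])
  qed
  have HE: "\<And>i n. fps_nth (H i) n = E i n" using sys_E[OF sysH] by auto
  have gH: "g j = H j" for j by (rule fps_ext) (simp add: gE HE)
  have part3: "\<forall>j\<ge>1. g j = fps_X ^ j * (6 * C_ser t * a_ser t ^ j)"
    using gH by (simp add: H_def C_def a_def)
  define w where "w = a * fps_X"
  define L where "L = fps_const (a_ser t) * V_ser"
  have Lw: "L = fps_X * fps_const w"
  proof -
    have "fps_const a * (fps_X * fps_const fps_X) = fps_X * (fps_const a * fps_const fps_X)"
      by (rule mult.left_commute)
    then show ?thesis unfolding L_def V_ser_def w_def a_def[symmetric] by simp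
  qed
  have L00: "fps_nth L 0 = 0" by (simp add: Lw)
  have L0: "fps_nth (1 - L) 0 = 1" by (simp add: Lw)
  have inv: "(1 - L) * inverse (1 - L) = 1"
  proof -
    have i1: "inverse (fps_nth (1 - L) 0) = 1" using L00 by simp
    have "(1 - L) * fps_right_inverse (1 - L) 1 = 1" by (rule fps_right_inverse) (simp add: L00)
    then show ?thesis unfolding fps_inverse_def[of "1 - L"] i1 .
  qed
  have mul: "Abs_fps g * (1 - L) = fps_const (2 * C) * (2 + L)"
  proof (rule fps_ext)
    fix n
    have ee: "Abs_fps g * (1 - L) = Abs_fps g - fps_X * (Abs_fps g * fps_const w)"
      unfolding Lw by (simp add: right_diff_distrib mult.left_commute)
    have l1: "fps_nth (Abs_fps g * (1 - L)) n = g n - (if n = 0 then 0 else g (n - 1) * w)"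
      unfolding ee by simp
    have l2: "fps_nth (fps_const (2 * C) * (2 + L)) n = 2 * C * ((if n = 0 then 2 else 0) + (if n = 1 then w else 0))"
      by (simp add: Lw fps_numeral_nth)
    consider "n = 0" | "n = 1" | k where "n = Suc (Suc k)" by (metis One_nat_def not0_implies_Suc)
    then show "fps_nth (Abs_fps g * (1 - L)) n = fps_nth (fps_const (2 * C) * (2 + L)) n"
    proof cases
      case 1 then show ?thesis unfolding l1 l2 by (simp add: gH H_def)
    next
      case 2
      have "g 1 - g 0 * w = 2 * C * (0 + w)"
        unfolding gH H_def w_def by (simp add: algebra_simps)
      then show ?thesis unfolding l1 l2 using 2 by simp
    next
      case 3
      have "g (Suc (Suc k)) - g (Suc k) * w = 2 * C * (0 + 0)"
        unfolding gH H_def w_def by (simp add: algebra_simps)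
      then show ?thesis unfolding l1 l2 using 3 by simp
    qed
  qed
  have part1: "Abs_fps g = fps_const (2 * C_ser t) * (2 + fps_const (a_ser t) * V_ser)
         * inverse (1 - fps_const (a_ser t) * V_ser)"
  proof -
    have "Abs_fps g = Abs_fps g * ((1 - L) * inverse (1 - L))" using inv by simp
    also have "\<dots> = fps_const (2 * C) * (2 + L) * inverse (1 - L)" by (simp only: mult.assoc[symmetric] mul)
    finally show ?thesis unfolding L_def C_def .
  qed
  have part2: "\<forall>j n. fps_nth (g j) n \<noteq> 0 \<longrightarrow> j \<le> n \<and> 3 dvd (n - j)"
    unfolding gE using E_nz by fastforce
  have part4: "\<forall>j\<ge>1. \<forall>N. fps_nth (g j) (j + 3 * N) =
           (\<Sum>i=0..N. 2 ^ (2*i + j - 1) / 3 ^ (2*N + i + j - 1) * real ((2*N + j + i) choose i))"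
    using sum_conv by (simp add: gE E_at cj_def W_def)
  have part5: "\<forall>N. fps_nth (g 0) (3 * N) =
           (\<Sum>i=0..N. 2 ^ (2*i) / 3 ^ (2*N + i) * real ((2*N + i) choose i))"
    using sum_conv0 E_at[of 0] by (simp add: gE cj_def W_def)
  have part6: "\<forall>N. fps_nth gb (3 * N + 2) = 1/3 * fps_nth (g 1) (3 * N + 1)
           \<and> fps_nth gb (3 * N + 2) =
             (\<Sum>i=0..N. 2 ^ (2*i) / 3 ^ (2*N + i + 1) * real ((2*N + 1 + i) choose i))"
  proof
    fix N
    have e1: "fps_nth gb (3 * N + 2) = 1/3 * fps_nth (g 1) (3 * N + 1)"
      by (simp add: gbE gE Eb_def)
    have "fps_nth (g 1) (3 * N + 1) = cj 1 * W 1 N" using E_at[of 1 N] by (simp add: gE add.commute)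
    then show "fps_nth gb (3 * N + 2) = 1/3 * fps_nth (g 1) (3 * N + 1)
           \<and> fps_nth gb (3 * N + 2) =
             (\<Sum>i=0..N. 2 ^ (2*i) / 3 ^ (2*N + i + 1) * real ((2*N + 1 + i) choose i))"
      using e1 sum_convb[of N] by (simp add: cj_def W_def)
  qed
  show ?thesis by (rule conjI[OF part1 conjI[OF part2 conjI[OF part3 conjI[OF part4 conjI[OF part5 part6]]]]])
qed


end
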